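(* Let $p$ be a binary word of length $l$ with $r$ runs, of which $r_1$ have size $1$. For every $n\ge0$, $$B_{n,p}(2)=\begin{cases} r_1\binom{n-r}{l-r+1} & \text{if } l\ge 2,\\[2pt] \binom{n}{2} & \text{if } l=1.\end{cases}$$
   Context: $c_p(w)$ is the number of occurrences of $p$ as a (not necessarily consecutive) subsequence of the binary word $w$; $B_{n,p}(k)$ is the number of binary words $w$ of length $n$ with $c_p(w)=k$. A run is a maximal block of consecutive equal letters; its size is its length; $r_i$ denotes the number of runs of $p$ of size $i$. Convention: $\binom{a}{b}=0$ unless $0\le b\le a$. *)

theory Defs
  imports Main
begin

definition occ :: "bool list \<Rightarrow> bool list \<Rightarrow> nat" where
  "occ p w = card {I. I \<subseteq> {0..<length w} \<and> card I = length p \<and> nths w I = p}"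

definition B :: "nat \<Rightarrow> bool list \<Rightarrow> nat \<Rightarrow> nat" where
  "B n p k = card {w :: bool list. length w = n \<and> occ p w = k}"

text \<open>Run decomposition: list of (letter, size) of maximal blocks, left to right.\<close>
fun runs :: "bool list \<Rightarrow> (bool \<times> nat) list" where
  "runs [] = []"
| "runs (x # xs) = (case runs xs of
      [] \<Rightarrow> [(x, 1)]
    | (y, k) # rs \<Rightarrow> (if x = y then (y, Suc k) # rs else (x, 1) # (y, k) # rs))"

definition num_runs :: "bool list \<Rightarrow> nat" where
  "num_runs p = length (runs p)"

definition runs_of_size :: "bool list \<Rightarrow> nat \<Rightarrow> nat" where
  "runs_of_size p i = length (filter (\<lambda>(a, k). k = i) (runs p))"

end

theory Submission imports Defs begin

fun cnt :: "bool list \<Rightarrow> bool list \<Rightarrow> nat" where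
  "cnt [] w = 1"
| "cnt (x#p) [] = 0"
| "cnt (x#p) (y#w) = cnt (x#p) w + (if x = y then cnt p w else 0)"

definition SS :: "bool list \<Rightarrow> bool list \<Rightarrow> nat set set" where
  "SS p w = {I. I \<subseteq> {0..<length w} \<and> card I = length p \<and> nths w I = p}"

lemma split0: "0 \<notin> I \<Longrightarrow> I = Suc ` {j. Suc j \<in> I}"
proof (rule set_eqI)
  fix k assume "0 \<notin> I" thus "k \<in> I \<longleftrightarrow> k \<in> Suc ` {j. Suc j \<in> I}" by (cases k) auto
qed

lemma split1: "0 \<in> I \<Longrightarrow> I = insert 0 (Suc ` {j. Suc j \<in> I})"
proof (rule set_eqI)
  fix k assume "0 \<in> I" thus "k \<in> I \<longleftrightarrow> k \<in> insert 0 (Suc ` {j. Suc j \<in> I})" by (cases k) auto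
qed

lemma SS_Nil: "SS [] w = {{}}"
proof -
  have "I \<subseteq> {0..<length w} \<Longrightarrow> card I = 0 \<Longrightarrow> I = {}" for I
    using finite_subset by fastforce
  then show ?thesis unfolding SS_def by auto
qed

lemma SS_Cons_Nil: "SS (x#p) [] = {}"
  unfolding SS_def by auto

lemma SS_Cons_Cons: "SS (x#p) (y#w) =
   (image Suc) ` SS (x#p) w \<union> (if x = y then (\<lambda>J. insert 0 (Suc ` J)) ` SS p w else {})"
  (is "?L = ?R")
proof
  show "?L \<subseteq> ?R"
  proof
    fix I assume I: "I \<in> ?L"
    define J where "J = {j. Suc j \<in> I}"
    have sub: "I \<subseteq> {0..<Suc (length w)}" "card I = Suc (length p)" "nths (y#w) I = x#p"
      using I unfolding SS_def by auto
    have Jsub: "J \<subseteq> {0..<length w}" using sub(1) unfolding J_def by auto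
    have nthsI: "nths (y#w) I = (if 0 \<in> I then [y] else []) @ nths w J"
      unfolding J_def by (simp add: nths_Cons)
    show "I \<in> ?R"
    proof (cases "0 \<in> I")
      case False
      have IJ: "I = Suc ` J" using split0[OF False] J_def by simp
      have "card J = card I" using IJ by (simp add: card_image)
      moreover have "nths w J = x#p" using nthsI sub(3) False by simp
      ultimately have "J \<in> SS (x#p) w" using Jsub sub(2) unfolding SS_def by simp
      thus ?thesis using IJ by blast
    next
      case True
      have IJ: "I = insert 0 (Suc ` J)" using split1[OF True] J_def by simp
      have fJ: "finite J" using Jsub finite_subset by blast
      have "card I = Suc (card J)" using IJ fJ by (simp add: card_image)
      hence "card J = length p" using sub(2) by simp
      moreover have "y = x" "nths w J = p" using nthsI sub(3) True by auto
      ultimately have "J \<in> SS p w" using Jsub unfolding SS_def by simp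
      thus ?thesis using IJ \<open>y = x\<close> by auto
    qed
  qed
next
  show "?R \<subseteq> ?L"
  proof
    fix I assume I: "I \<in> ?R"
    show "I \<in> ?L"
    proof (cases "I \<in> (image Suc) ` SS (x#p) w")
      case True
      then obtain J where J: "J \<in> SS (x#p) w" "I = Suc ` J" by blast
      have "{j. Suc j \<in> Suc ` J} = J" by auto
      moreover have "0 \<notin> Suc ` J" by auto
      ultimately have "nths (y#w) I = nths w J" using J(2) by (simp add: nths_Cons)
      moreover have "card I = card J" using J(2) by (simp add: card_image)
      ultimately show ?thesis using J unfolding SS_def by auto
    next
      case False
      then have "x = y" and "I \<in> (\<lambda>J. insert 0 (Suc ` J)) ` SS p w" using I by (auto split: if_splits)
      then obtain J where J: "J \<in> SS p w" "I = insert 0 (Suc ` J)" by blast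
      have fJ: "finite J" using J(1) finite_subset unfolding SS_def by blast
      have "{j. Suc j \<in> I} = J" using J(2) by auto
      hence "nths (y#w) I = y # nths w J" using J(2) by (simp add: nths_Cons)
      moreover have "card I = Suc (card J)" using J(2) fJ by (simp add: card_image)
      ultimately show ?thesis using J \<open>x = y\<close> unfolding SS_def by auto
    qed
  qed
qed

lemma finite_SS: "finite (SS p w)"
  unfolding SS_def by (rule finite_subset[of _ "Pow {0..<length w}"]) auto

lemma occ_eq_cnt: "occ p w = cnt p w"
proof -
  have "card (SS p w) = cnt p w"
  proof (induction w arbitrary: p)
    case Nil
    then show ?case by (cases p) (auto simp: SS_Nil SS_Cons_Nil)
  next
    case (Cons y w)
    show ?case
    proof (cases p)
      case Nil then show ?thesis by (simp add: SS_Nil)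
    next
      case (Cons x p')
      have inj1: "inj_on (image Suc) (SS (x#p') w)"
        by (rule inj_onI) (simp add: inj_image_eq_iff)
      have inj2: "inj_on (\<lambda>J. insert 0 (Suc ` J)) (SS p' w)"
      proof (rule inj_onI)
        fix A B assume "insert 0 (Suc ` A) = insert (0::nat) (Suc ` B)"
        hence e: "\<And>a. Suc a \<in> insert 0 (Suc ` A) \<longleftrightarrow> Suc a \<in> insert 0 (Suc ` B)" by simp
        show "A = B"
        proof (rule set_eqI)
          fix a show "a \<in> A \<longleftrightarrow> a \<in> B" using e[of a] by auto
        qed
      qed
      have disj: "(image Suc) ` SS (x#p') w \<inter> (\<lambda>J. insert 0 (Suc ` J)) ` SS p' w = {}" by auto
      show ?thesis
      proof (cases "x = y")
        case True
        have "card (SS p (y#w)) = card ((image Suc) ` SS (x#p') w) + card ((\<lambda>J. insert 0 (Suc ` J)) ` SS p' w)"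
          unfolding Cons SS_Cons_Cons using True disj
          by (simp add: card_Un_disjoint finite_SS)
        also have "\<dots> = cnt (x#p') w + cnt p' w"
          using inj1 inj2 Cons.IH by (simp add: card_image)
        finally show ?thesis using Cons True by simp
      next
        case False
        have "card (SS p (y#w)) = card ((image Suc) ` SS (x#p') w)"
          unfolding Cons SS_Cons_Cons using False by simp
        also have "\<dots> = cnt (x#p') w" using inj1 Cons.IH by (simp add: card_image)
        finally show ?thesis using Cons False by simp
      qed
    qed
  qed
  thus ?thesis unfolding occ_def SS_def by simp
qed

definition cw :: "nat \<Rightarrow> (bool list \<Rightarrow> bool) \<Rightarrow> nat" where
  "cw n P = card {w. length w = n \<and> P w}"

lemma finite_len: "finite {w::bool list. length w = n \<and> P w}"
  by (rule finite_subset[OF _ finite_lists_length_eq[of "UNIV::bool set" n]]) auto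

lemma cw_0: "cw 0 P = (if P [] then 1 else 0)"
proof -
  have "{w::bool list. length w = 0 \<and> P w} = (if P [] then {[]} else {})" by auto
  thus ?thesis unfolding cw_def by simp
qed

lemma cw_Suc: "cw (Suc n) P = cw n (\<lambda>u. P (x#u)) + cw n (\<lambda>u. P ((\<not>x)#u))"
proof -
  have eq: "{w. length w = Suc n \<and> P w} = Cons x ` {u. length u = n \<and> P (x#u)} \<union> Cons (\<not>x) ` {u. length u = n \<and> P ((\<not>x)#u)}"
    (is "_ = ?A \<union> ?B")
  proof
    show "{w. length w = Suc n \<and> P w} \<subseteq> ?A \<union> ?B"
    proof
      fix w assume "w \<in> {w. length w = Suc n \<and> P w}"
      then obtain z u where "w = z#u" "length u = n" "P (z#u)" by (cases w) auto
      thus "w \<in> ?A \<union> ?B" by (cases "z = x") auto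
    qed
  qed auto
  have "card (?A \<union> ?B) = card ?A + card ?B"
    by (rule card_Un_disjoint) (auto simp: finite_len)
  thus ?thesis unfolding cw_def eq by (simp add: card_image)
qed

lemma cw_cong: "(\<And>u. length u = n \<Longrightarrow> P u = Q u) \<Longrightarrow> cw n P = cw n Q"
  unfolding cw_def by (rule arg_cong[where f=card]) auto

lemma cw_False: "cw n (\<lambda>_. False) = 0"
  unfolding cw_def by simp

lemma cw_disj: "(\<And>u. \<not> (P u \<and> Q u)) \<Longrightarrow> cw n (\<lambda>u. P u \<or> Q u) = cw n P + cw n Q"
proof -
  assume d: "\<And>u. \<not> (P u \<and> Q u)"
  have "{w. length w = n \<and> (P w \<or> Q w)} = {w. length w = n \<and> P w} \<union> {w. length w = n \<and> Q w}" by auto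
  thus ?thesis unfolding cw_def using d by (simp add: card_Un_disjoint finite_len disjoint_iff)
qed


lemma cnt_Nil_r: "cnt q [] = (if q = [] then 1 else 0)"
  by (cases q) auto

lemma cnt_mono: "cnt q u \<le> cnt q (z#u)"
  by (cases q) auto

lemma cnt_pos_tl: "cnt (x#q) u > 0 \<Longrightarrow> cnt q u > 0"
proof (induction u)
  case Nil then show ?case by simp
next
  case (Cons z u)
  show ?case
  proof (cases "cnt (x#q) u > 0")
    case True
    then show ?thesis using Cons.IH cnt_mono[of q u z] by linarith
  next
    case False
    then have "x = z" "cnt q u > 0" using Cons.prems by (auto split: if_splits)
    then show ?thesis using cnt_mono[of q u z] by linarith
  qed
qed

lemma cnt_tl0: "cnt q u = 0 \<Longrightarrow> cnt (x#q) u = 0"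
  using cnt_pos_tl[of x q u] by linarith

lemma L1: "cnt (x#q) u = 1 \<Longrightarrow> cnt (x#x#q) u = 0"
proof (induction u)
  case Nil then show ?case by simp
next
  case (Cons z u)
  show ?case
  proof (cases "z = x")
    case True
    with Cons.prems have s: "cnt (x#q) u + cnt q u = 1" by simp
    have "cnt (x#q) u = 0"
    proof (rule ccontr)
      assume "cnt (x#q) u \<noteq> 0"
      hence "cnt q u > 0" using cnt_pos_tl by blast
      with s \<open>cnt (x#q) u \<noteq> 0\<close> show False by simp
    qed
    thus ?thesis using True cnt_tl0 by simp
  next
    case False
    thus ?thesis using Cons by simp
  qed
qed

lemma N0: "cw m (\<lambda>u. cnt [x] u = 0) = 1"
proof (induction m)
  case 0 then show ?case by (simp add: cw_0)
next
  case (Suc m)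
  have "cw (Suc m) (\<lambda>u. cnt [x] u = 0) = cw m (\<lambda>u. cnt [x] (x#u) = 0) + cw m (\<lambda>u. cnt [x] ((\<not>x)#u) = 0)"
    by (rule cw_Suc)
  also have "cw m (\<lambda>u. cnt [x] (x#u) = 0) = 0" by (simp add: cw_False)
  also have "cw m (\<lambda>u. cnt [x] ((\<not>x)#u) = 0) = cw m (\<lambda>u. cnt [x] u = 0)" by simp
  finally show ?case using Suc by simp
qed

lemma N1: "cw m (\<lambda>u. cnt [x] u = 1) = m"
proof (induction m)
  case 0 then show ?case by (simp add: cw_0)
next
  case (Suc m)
  have "cw (Suc m) (\<lambda>u. cnt [x] u = 1) = cw m (\<lambda>u. cnt [x] (x#u) = 1) + cw m (\<lambda>u. cnt [x] ((\<not>x)#u) = 1)"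
    by (rule cw_Suc)
  also have "cw m (\<lambda>u. cnt [x] (x#u) = 1) = cw m (\<lambda>u. cnt [x] u = 0)" by simp
  also have "cw m (\<lambda>u. cnt [x] ((\<not>x)#u) = 1) = cw m (\<lambda>u. cnt [x] u = 1)" by simp
  finally show ?case using Suc N0 by simp
qed

lemma N2: "cw m (\<lambda>u. cnt [x] u = 2) = m choose 2"
proof (induction m)
  case 0 then show ?case by (simp add: cw_0)
next
  case (Suc m)
  have "cw (Suc m) (\<lambda>u. cnt [x] u = 2) = cw m (\<lambda>u. cnt [x] (x#u) = 2) + cw m (\<lambda>u. cnt [x] ((\<not>x)#u) = 2)"
    by (rule cw_Suc)
  also have "cw m (\<lambda>u. cnt [x] (x#u) = 2) = cw m (\<lambda>u. cnt [x] u = 1)" by simp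
  also have "cw m (\<lambda>u. cnt [x] ((\<not>x)#u) = 2) = cw m (\<lambda>u. cnt [x] u = 2)" by simp
  finally show ?case using Suc N1 by (simp add: choose_two numeral_2_eq_2)
qed

lemma runs_hd: "\<exists>k rs. runs (x#q) = (x, Suc k) # rs"
  by (auto split: list.split)

definition fr :: "bool \<Rightarrow> bool list \<Rightarrow> nat" where
  "fr x q = snd (hd (runs (x#q)))"
definition Sg :: "bool \<Rightarrow> bool list \<Rightarrow> nat" where
  "Sg x q = length (filter (\<lambda>(a, k). k = 1) (tl (runs (x#q))))"
definition ee :: "bool list \<Rightarrow> nat" where
  "ee p = length p - num_runs p"

lemma runs_of_size_Sg: "runs_of_size (x#q) 1 = Sg x q + (if fr x q = 1 then 1 else 0)"
proof -
  obtain k rs where r: "runs (x#q) = (x, Suc k) # rs" using runs_hd by blast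
  show ?thesis unfolding runs_of_size_def Sg_def fr_def r by simp
qed

lemma runs_len: "num_runs p \<le> length p"
proof (induction p)
  case Nil then show ?case by (simp add: num_runs_def)
next
  case (Cons x q)
  thus ?case by (auto simp: num_runs_def split: list.split)
qed

lemma runs_single: "runs [x] = [(x, 1)]" by simp

lemma runs_same: "runs (x#x#q) = (x, Suc (fr x q)) # tl (runs (x#q))"
proof -
  obtain k rs where r: "runs (x#q) = (x, Suc k) # rs" using runs_hd by blast
  have h: "runs (x#x#q) = (case runs (x#q) of [] \<Rightarrow> [(x,1)] | (z,k)#rs \<Rightarrow> if x = z then (z, Suc k)#rs else (x,1)#(z,k)#rs)"
    by (rule runs.simps(2))
  show ?thesis using h unfolding fr_def r by (simp del: runs.simps)
qed

lemma runs_diff: "y \<noteq> x \<Longrightarrow> runs (x#y#q) = (x, 1) # runs (y#q)"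
proof -
  assume "y \<noteq> x"
  obtain k rs where r: "runs (y#q) = (y, Suc k) # rs" using runs_hd by blast
  have h: "runs (x#y#q) = (case runs (y#q) of [] \<Rightarrow> [(x,1)] | (z,k)#rs \<Rightarrow> if x = z then (z, Suc k)#rs else (x,1)#(z,k)#rs)"
    by (rule runs.simps(2))
  show ?thesis using h \<open>y \<noteq> x\<close> unfolding r by (simp del: runs.simps)
qed

lemma nr_pos: "num_runs (x#q) \<ge> 1"
  using runs_hd[of x q] by (auto simp: num_runs_def)

lemma fr_pos: "fr x q \<ge> 1"
  using runs_hd[of x q] by (auto simp: fr_def)

lemma facts_nil: "Sg x [] = 0" "fr x [] = 1" "num_runs [x] = 1" "ee [x] = 0"
  by (auto simp: Sg_def fr_def num_runs_def ee_def)

lemma facts_same: "Sg x (x#q) = Sg x q" "fr x (x#q) = Suc (fr x q)"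
  "num_runs (x#x#q) = num_runs (x#q)" "ee (x#x#q) = Suc (ee (x#q))"
proof -
  obtain k rs where r: "runs (x#q) = (x, Suc k) # rs" using runs_hd by blast
  show "Sg x (x#q) = Sg x q" "fr x (x#q) = Suc (fr x q)" "num_runs (x#x#q) = num_runs (x#q)"
    using r runs_same[of x q] by (auto simp: Sg_def fr_def num_runs_def)
  then show "ee (x#x#q) = Suc (ee (x#q))" using runs_len[of "x#q"] by (simp add: ee_def)
qed

lemma facts_diff: assumes "y \<noteq> x"
  shows "Sg x (y#q) = Sg y q + (if fr y q = 1 then 1 else 0)" "fr x (y#q) = 1"
  "num_runs (x#y#q) = Suc (num_runs (y#q))" "ee (x#y#q) = ee (y#q)"
proof -
  show "Sg x (y#q) = Sg y q + (if fr y q = 1 then 1 else 0)"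
    using runs_diff[OF assms] runs_of_size_Sg[of y q] by (simp add: Sg_def runs_of_size_def)
  show "fr x (y#q) = 1" "num_runs (x#y#q) = Suc (num_runs (y#q))"
    using runs_diff[OF assms] by (auto simp: fr_def num_runs_def)
  then show "ee (x#y#q) = ee (y#q)" by (simp add: ee_def)
qed

lemma fr_same_ge2: "fr x (x#q) \<ge> 2" using facts_same(2) fr_pos[of x q] by simp

lemma fr_diff_next: "y \<noteq> x \<Longrightarrow> fr y (x#q) = 1" using facts_diff(2) by blast


lemma cw_Suc2: "y \<noteq> x \<Longrightarrow> cw (Suc n) P = cw n (\<lambda>u. P (x#u)) + cw n (\<lambda>u. P (y#u))"
proof -
  assume "y \<noteq> x" hence "y = (\<not>x)" by auto
  thus ?thesis using cw_Suc[of n P x] by simp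
qed

lemma cw_none: "(\<And>u. \<not> P u) \<Longrightarrow> cw n P = 0"
  by (metis (mono_tags, lifting) cw_False cw_cong)

lemma A1_from_Z:
  assumes Z: "\<And>m. cw m (\<lambda>u. cnt (x#q) u = 0 \<and> cnt q u = 1) =
     (if m+1 \<ge> num_runs (x#q) then (m+1-num_runs (x#q)) choose ee (x#q) else 0)"
  shows "cw m (\<lambda>u. cnt (x#q) u = 1) = (m+1-num_runs (x#q)) choose (Suc (ee (x#q)))"
proof (induction m)
  case 0
  have "1 - num_runs (x#q) = 0" using nr_pos[of x q] by simp
  then show ?case by (simp add: cw_0)
next
  case (Suc m)
  define r where "r = num_runs (x#q)"
  define e where "e = ee (x#q)"
  have r1: "r \<ge> 1" using nr_pos[of x q] r_def by simp
  have "cw (Suc m) (\<lambda>u. cnt (x#q) u = 1) =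
     cw m (\<lambda>u. cnt (x#q) (x#u) = 1) + cw m (\<lambda>u. cnt (x#q) ((\<not>x)#u) = 1)"
    by (rule cw_Suc)
  also have "cw m (\<lambda>u. cnt (x#q) (x#u) = 1) = cw m (\<lambda>u. cnt (x#q) u = 0 \<and> cnt q u = 1)"
  proof (rule cw_cong)
    fix u :: "bool list"
    show "(cnt (x#q) (x#u) = 1) = (cnt (x#q) u = 0 \<and> cnt q u = 1)"
      using cnt_pos_tl[of x q u] by (cases "cnt (x#q) u") auto
  qed
  also have "cw m (\<lambda>u. cnt (x#q) ((\<not>x)#u) = 1) = cw m (\<lambda>u. cnt (x#q) u = 1)" by simp
  finally have eq: "cw (Suc m) (\<lambda>u. cnt (x#q) u = 1) =
     (if m+1 \<ge> r then (m+1-r) choose e else 0) + ((m+1-r) choose (Suc e))"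
    using Z[of m] Suc r_def e_def by simp
  show ?case
  proof (cases "m+1 \<ge> r")
    case True
    hence "Suc m + 1 - r = Suc (m+1-r)" by simp
    then show ?thesis using eq True r_def e_def by simp
  next
    case False
    hence "Suc m + 1 - r = 0" "m+1-r = 0" by auto
    then show ?thesis using eq False r_def e_def by simp
  qed
qed

lemma Zlem: "cw m (\<lambda>u. cnt (x#q) u = 0 \<and> cnt q u = 1) =
     (if m+1 \<ge> num_runs (x#q) then (m+1-num_runs (x#q)) choose ee (x#q) else 0)"
proof (induction q arbitrary: x m)
  case Nil
  have "cw m (\<lambda>u. cnt [x] u = 0 \<and> cnt [] u = 1) = cw m (\<lambda>u. cnt [x] u = 0)" by simp
  then show ?case using N0 facts_nil by simp
next
  case (Cons z q)
  show ?case
  proof (cases "z = x")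
    case True
    have A1: "cw m (\<lambda>u. cnt (x#q) u = 1) = (m+1-num_runs (x#q)) choose (Suc (ee (x#q)))"
      by (rule A1_from_Z) (rule Cons.IH)
    have "cw m (\<lambda>u. cnt (x#x#q) u = 0 \<and> cnt (x#q) u = 1) = cw m (\<lambda>u. cnt (x#q) u = 1)"
      by (rule cw_cong) (use L1 in auto)
    also have "\<dots> = (m+1-num_runs (x#x#q)) choose (ee (x#x#q))"
      using A1 facts_same by simp
    finally show ?thesis using True facts_same(4) by simp
  next
    case False
    show ?thesis
    proof (induction m)
      case 0
      have "num_runs (x#z#q) \<ge> 2" using facts_diff(3)[OF False] nr_pos[of z q] by simp
      then show ?case by (simp add: cw_0)
    next
      case (Suc m)
      have "cw (Suc m) (\<lambda>u. cnt (x#z#q) u = 0 \<and> cnt (z#q) u = 1) =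
        cw m (\<lambda>u. cnt (x#z#q) (x#u) = 0 \<and> cnt (z#q) (x#u) = 1) +
        cw m (\<lambda>u. cnt (x#z#q) (z#u) = 0 \<and> cnt (z#q) (z#u) = 1)"
        by (rule cw_Suc2[OF False])
      also have "cw m (\<lambda>u. cnt (x#z#q) (x#u) = 0 \<and> cnt (z#q) (x#u) = 1) = 0"
        using False by (intro cw_none) auto
      also have "cw m (\<lambda>u. cnt (x#z#q) (z#u) = 0 \<and> cnt (z#q) (z#u) = 1) =
          cw m (\<lambda>u. cnt (z#q) u = 0 \<and> cnt q u = 1)"
      proof (rule cw_cong)
        fix u :: "bool list"
        show "(cnt (x#z#q) (z#u) = 0 \<and> cnt (z#q) (z#u) = 1) = (cnt (z#q) u = 0 \<and> cnt q u = 1)"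
          using False cnt_pos_tl[of z q u] cnt_tl0[of "z#q" u x] by (cases "cnt (z#q) u") auto
      qed
      finally show ?case using Cons.IH[where x=z and m=m] facts_diff[OF False] by simp
    qed
  qed
qed

lemma A1lem: "cw m (\<lambda>u. cnt (x#q) u = 1) = (m+1-num_runs (x#q)) choose (Suc (ee (x#q)))"
  by (rule A1_from_Z) (rule Zlem)


lemma Vlem: assumes zx: "z \<noteq> x"
  shows "cw m (\<lambda>u. cnt (x#z#q) u = 0 \<and> cnt (z#q) u = 1 \<and> cnt q u = 1) =
    (if m \<ge> num_runs (z#q) \<and> fr z q = 1 then (m - num_runs (z#q)) choose ee (z#q) else 0)"
proof (cases m)
  case 0
  have "num_runs (z#q) \<ge> 1" by (rule nr_pos)
  then show ?thesis using 0 by (simp add: cw_0)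
next
  case (Suc m')
  have "cw (Suc m') (\<lambda>u. cnt (x#z#q) u = 0 \<and> cnt (z#q) u = 1 \<and> cnt q u = 1) =
     cw m' (\<lambda>u. cnt (x#z#q) (z#u) = 0 \<and> cnt (z#q) (z#u) = 1 \<and> cnt q (z#u) = 1) +
     cw m' (\<lambda>u. cnt (x#z#q) (x#u) = 0 \<and> cnt (z#q) (x#u) = 1 \<and> cnt q (x#u) = 1)"
    by (rule cw_Suc2) (use zx in auto)
  also have "cw m' (\<lambda>u. cnt (x#z#q) (x#u) = 0 \<and> cnt (z#q) (x#u) = 1 \<and> cnt q (x#u) = 1) = 0"
    using zx by (intro cw_none) auto
  finally have eq: "cw m (\<lambda>u. cnt (x#z#q) u = 0 \<and> cnt (z#q) u = 1 \<and> cnt q u = 1) =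
     cw m' (\<lambda>u. cnt (x#z#q) (z#u) = 0 \<and> cnt (z#q) (z#u) = 1 \<and> cnt q (z#u) = 1)"
    using Suc by simp
  show ?thesis
  proof (cases q)
    case Nil
    have "cw m' (\<lambda>u. cnt (x#z#q) (z#u) = 0 \<and> cnt (z#q) (z#u) = 1 \<and> cnt q (z#u) = 1) =
       cw m' (\<lambda>u. cnt [z] u = 0)"
    proof (rule cw_cong)
      fix u :: "bool list"
      show "(cnt (x#z#q) (z#u) = 0 \<and> cnt (z#q) (z#u) = 1 \<and> cnt q (z#u) = 1) = (cnt [z] u = 0)"
        using Nil zx cnt_tl0[of "[z]" u x] by auto
    qed
    then show ?thesis using eq N0 Nil Suc facts_nil by simp
  next
    case (Cons w q3)
    show ?thesis
    proof (cases "w = z")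
      case True
      have "cw m' (\<lambda>u. cnt (x#z#q) (z#u) = 0 \<and> cnt (z#q) (z#u) = 1 \<and> cnt q (z#u) = 1) = 0"
      proof (rule cw_none)
        fix u :: "bool list"
        show "\<not> (cnt (x#z#q) (z#u) = 0 \<and> cnt (z#q) (z#u) = 1 \<and> cnt q (z#u) = 1)"
          using Cons True zx cnt_pos_tl[of z q3 u] cnt_tl0[of "z#q3" u z]
          by (cases "cnt (z#q3) u") auto
      qed
      moreover have "fr z q \<noteq> 1" using fr_same_ge2[of z q3] Cons True by simp
      ultimately show ?thesis using eq by simp
    next
      case False
      hence wx: "w = x" using zx by auto
      have "cw m' (\<lambda>u. cnt (x#z#q) (z#u) = 0 \<and> cnt (z#q) (z#u) = 1 \<and> cnt q (z#u) = 1) =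
        cw m' (\<lambda>u. cnt (z#q) u = 0 \<and> cnt q u = 1)"
      proof (rule cw_cong)
        fix u :: "bool list"
        show "(cnt (x#z#q) (z#u) = 0 \<and> cnt (z#q) (z#u) = 1 \<and> cnt q (z#u) = 1) =
          (cnt (z#q) u = 0 \<and> cnt q u = 1)"
          using Cons wx zx cnt_tl0[of "z#q" u x] by auto
      qed
      also have "\<dots> = (if m'+1 \<ge> num_runs (z#q) then (m'+1-num_runs (z#q)) choose ee (z#q) else 0)"
        by (rule Zlem)
      finally show ?thesis using eq Suc fr_diff_next[OF zx] Cons wx by simp
    qed
  qed
qed

lemma W2lem: "cw m (\<lambda>u. cnt (x#q) u = 0 \<and> cnt q u = 2) =
   (if m \<ge> num_runs (x#q) then Sg x q * ((m - num_runs (x#q)) choose ee (x#q)) else 0)"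
proof (induction q arbitrary: x m)
  case Nil
  have "cw m (\<lambda>u. cnt [x] u = 0 \<and> cnt [] u = 2) = 0" by (intro cw_none) auto
  then show ?case using facts_nil by simp
next
  case (Cons z q)
  show ?case
  proof (cases "z = x")
    case True
    show ?thesis unfolding True
    proof (induction m)
      case 0
      have "num_runs (x#x#q) \<ge> 1" by (rule nr_pos)
      then show ?case by (simp add: cw_0)
    next
      case (Suc m)
      define r where "r = num_runs (x#q)"
      define e where "e = ee (x#q)"
      define S where "S = Sg x q"
      have "cw (Suc m) (\<lambda>u. cnt (x#x#q) u = 0 \<and> cnt (x#q) u = 2) =
        cw m (\<lambda>u. cnt (x#x#q) (x#u) = 0 \<and> cnt (x#q) (x#u) = 2) +
        cw m (\<lambda>u. cnt (x#x#q) ((\<not>x)#u) = 0 \<and> cnt (x#q) ((\<not>x)#u) = 2)"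
        by (rule cw_Suc)
      also have "cw m (\<lambda>u. cnt (x#x#q) (x#u) = 0 \<and> cnt (x#q) (x#u) = 2) =
          cw m (\<lambda>u. cnt (x#q) u = 0 \<and> cnt q u = 2)"
      proof (rule cw_cong)
        fix u :: "bool list"
        show "(cnt (x#x#q) (x#u) = 0 \<and> cnt (x#q) (x#u) = 2) = (cnt (x#q) u = 0 \<and> cnt q u = 2)"
          using cnt_tl0[of "x#q" u x] by auto
      qed
      also have "cw m (\<lambda>u. cnt (x#x#q) ((\<not>x)#u) = 0 \<and> cnt (x#q) ((\<not>x)#u) = 2) =
          cw m (\<lambda>u. cnt (x#x#q) u = 0 \<and> cnt (x#q) u = 2)" by simp
      finally have eq: "cw (Suc m) (\<lambda>u. cnt (x#x#q) u = 0 \<and> cnt (x#q) u = 2) =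
         (if m \<ge> r then S * ((m - r) choose e) else 0) + (if m \<ge> r then S * ((m - r) choose Suc e) else 0)"
        using Cons.IH[where x=x and m=m] Suc facts_same r_def e_def S_def by simp
      show ?case
      proof (cases "m \<ge> r")
        case True
        hence "Suc m - r = Suc (m - r)" by simp
        then show ?thesis using eq True facts_same r_def e_def S_def by (simp add: algebra_simps)
      next
        case False
        hence "Suc m - r = 0" by simp
        then show ?thesis using eq False facts_same r_def e_def S_def by simp
      qed
    qed
  next
    case False
    show ?thesis
    proof (cases m)
      case 0
      have "num_runs (x#z#q) \<ge> 1" by (rule nr_pos)
      then show ?thesis using 0 by (simp add: cw_0)
    next
      case (Suc m')
      have "cw (Suc m') (\<lambda>u. cnt (x#z#q) u = 0 \<and> cnt (z#q) u = 2) =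
        cw m' (\<lambda>u. cnt (x#z#q) (x#u) = 0 \<and> cnt (z#q) (x#u) = 2) +
        cw m' (\<lambda>u. cnt (x#z#q) (z#u) = 0 \<and> cnt (z#q) (z#u) = 2)"
        by (rule cw_Suc2[OF False])
      also have "cw m' (\<lambda>u. cnt (x#z#q) (x#u) = 0 \<and> cnt (z#q) (x#u) = 2) = 0"
        using False by (intro cw_none) auto
      also have "cw m' (\<lambda>u. cnt (x#z#q) (z#u) = 0 \<and> cnt (z#q) (z#u) = 2) =
          cw m' (\<lambda>u. (cnt (z#q) u = 0 \<and> cnt q u = 2) \<or> (cnt (x#z#q) u = 0 \<and> cnt (z#q) u = 1 \<and> cnt q u = 1))"
      proof (rule cw_cong)
        fix u :: "bool list"
        show "(cnt (x#z#q) (z#u) = 0 \<and> cnt (z#q) (z#u) = 2) =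
          ((cnt (z#q) u = 0 \<and> cnt q u = 2) \<or> (cnt (x#z#q) u = 0 \<and> cnt (z#q) u = 1 \<and> cnt q u = 1))"
          using False cnt_pos_tl[of z q u] cnt_tl0[of "z#q" u x]
          by (cases "cnt (z#q) u") auto
      qed
      also have "\<dots> = cw m' (\<lambda>u. cnt (z#q) u = 0 \<and> cnt q u = 2) +
          cw m' (\<lambda>u. cnt (x#z#q) u = 0 \<and> cnt (z#q) u = 1 \<and> cnt q u = 1)"
        by (rule cw_disj) auto
      finally have eq: "cw m (\<lambda>u. cnt (x#z#q) u = 0 \<and> cnt (z#q) u = 2) =
         (if m' \<ge> num_runs (z#q) then Sg z q * ((m' - num_runs (z#q)) choose ee (z#q)) else 0) +
         (if m' \<ge> num_runs (z#q) \<and> fr z q = 1 then (m' - num_runs (z#q)) choose ee (z#q) else 0)"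
        using Cons.IH[where x=z and m=m'] Vlem[OF False, of m' q] Suc by simp
      show ?thesis using eq Suc facts_diff[OF False] by (auto simp: algebra_simps)
    qed
  qed
qed

lemma U11lem: assumes "q \<noteq> []"
  shows "cw m (\<lambda>u. cnt (x#q) u = 1 \<and> cnt q u = 1) =
    (if m \<ge> num_runs (x#q) \<and> fr x q = 1 then (m - num_runs (x#q)) choose ee (x#q) else 0)"
proof -
  obtain z q'' where q: "q = z#q''" using assms by (cases q) auto
  show ?thesis
  proof (cases "z = x")
    case True
    have "cw m (\<lambda>u. cnt (x#q) u = 1 \<and> cnt q u = 1) = 0"
      using L1 q True by (intro cw_none) fastforce
    moreover have "fr x q \<noteq> 1" using fr_same_ge2[of x q''] q True by simp
    ultimately show ?thesis by simp
  next
    case False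
    show ?thesis
    proof (cases m)
      case 0
      have "num_runs (x#q) \<ge> 1" by (rule nr_pos)
      then show ?thesis using 0 by (simp add: cw_0)
    next
      case (Suc m')
      have "cw (Suc m') (\<lambda>u. cnt (x#q) u = 1 \<and> cnt q u = 1) =
        cw m' (\<lambda>u. cnt (x#q) (x#u) = 1 \<and> cnt q (x#u) = 1) +
        cw m' (\<lambda>u. cnt (x#q) (z#u) = 1 \<and> cnt q (z#u) = 1)"
        by (rule cw_Suc2[OF False])
      also have "cw m' (\<lambda>u. cnt (x#q) (z#u) = 1 \<and> cnt q (z#u) = 1) = 0"
      proof (rule cw_none)
        fix u :: "bool list"
        show "\<not> (cnt (x#q) (z#u) = 1 \<and> cnt q (z#u) = 1)"
          using q False cnt_pos_tl[of x q u] cnt_pos_tl[of z q'' u]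
          by (cases "cnt (z#q'') u") auto
      qed
      also have "cw m' (\<lambda>u. cnt (x#q) (x#u) = 1 \<and> cnt q (x#u) = 1) =
          cw m' (\<lambda>u. cnt (x#q) u = 0 \<and> cnt q u = 1)"
      proof (rule cw_cong)
        fix u :: "bool list"
        show "(cnt (x#q) (x#u) = 1 \<and> cnt q (x#u) = 1) = (cnt (x#q) u = 0 \<and> cnt q u = 1)"
          using q False by auto
      qed
      finally show ?thesis using Zlem[of m' x q] Suc q fr_diff_next[of x z q''] False by auto
    qed
  qed
qed

lemma Ylem: assumes "q \<noteq> []"
  shows "cw m (\<lambda>u. cnt (x#q) u + cnt q u = 2) =
    (if m \<ge> num_runs (x#q) then runs_of_size (x#q) 1 * ((m - num_runs (x#q)) choose ee (x#q)) else 0)"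
proof -
  have "cw m (\<lambda>u. cnt (x#q) u + cnt q u = 2) =
     cw m (\<lambda>u. (cnt (x#q) u = 0 \<and> cnt q u = 2) \<or> (cnt (x#q) u = 1 \<and> cnt q u = 1))"
  proof (rule cw_cong)
    fix u :: "bool list"
    show "(cnt (x#q) u + cnt q u = 2) = ((cnt (x#q) u = 0 \<and> cnt q u = 2) \<or> (cnt (x#q) u = 1 \<and> cnt q u = 1))"
      using cnt_pos_tl[of x q u] by (cases "cnt (x#q) u") auto
  qed
  also have "\<dots> = cw m (\<lambda>u. cnt (x#q) u = 0 \<and> cnt q u = 2) + cw m (\<lambda>u. cnt (x#q) u = 1 \<and> cnt q u = 1)"
    by (rule cw_disj) auto
  finally show ?thesis using W2lem[of m x q] U11lem[OF assms, of m x] runs_of_size_Sg[of x q]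
    by (auto simp: algebra_simps)
qed

lemma A2lem: assumes "q \<noteq> []"
  shows "cw m (\<lambda>u. cnt (x#q) u = 2) = runs_of_size (x#q) 1 * ((m - num_runs (x#q)) choose Suc (ee (x#q)))"
proof (induction m)
  case 0
  then show ?case by (simp add: cw_0)
next
  case (Suc m)
  define r where "r = num_runs (x#q)"
  define e where "e = ee (x#q)"
  define R where "R = runs_of_size (x#q) 1"
  have "cw (Suc m) (\<lambda>u. cnt (x#q) u = 2) =
     cw m (\<lambda>u. cnt (x#q) (x#u) = 2) + cw m (\<lambda>u. cnt (x#q) ((\<not>x)#u) = 2)"
    by (rule cw_Suc)
  also have "cw m (\<lambda>u. cnt (x#q) (x#u) = 2) = cw m (\<lambda>u. cnt (x#q) u + cnt q u = 2)" by simp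
  also have "cw m (\<lambda>u. cnt (x#q) ((\<not>x)#u) = 2) = cw m (\<lambda>u. cnt (x#q) u = 2)" by simp
  finally have eq: "cw (Suc m) (\<lambda>u. cnt (x#q) u = 2) =
     (if m \<ge> r then R * ((m - r) choose e) else 0) + R * ((m - r) choose Suc e)"
    using Ylem[OF assms, of m x] Suc r_def e_def R_def by simp
  show ?case
  proof (cases "m \<ge> r")
    case True
    hence "Suc m - r = Suc (m - r)" by simp
    then show ?thesis using eq True r_def e_def R_def by (simp add: algebra_simps)
  next
    case False
    hence "Suc m - r = 0" "m - r = 0" by auto
    then show ?thesis using eq False r_def e_def R_def by simp
  qed
qed

theorem mainTheorem3:
  fixes p :: "bool list" and n :: nat
  assumes "length p \<ge> 1"
  shows "B n p 2 =
    (if length p \<ge> 2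
     then runs_of_size p 1 * ((n - num_runs p) choose (length p - num_runs p + 1))
     else n choose 2)"
proof -
  obtain x q where p: "p = x#q" using assms by (cases p) auto
  have "B n p 2 = cw n (\<lambda>u. cnt p u = 2)"
    unfolding B_def cw_def occ_eq_cnt by simp
  show ?thesis
  proof (cases "q = []")
    case True
    then show ?thesis using \<open>B n p 2 = _\<close> p N2 by simp
  next
    case False
    have "length p \<ge> 2" using p False by (cases q) auto
    then show ?thesis using \<open>B n p 2 = _\<close> p A2lem[OF False, of n x] by (simp add: ee_def)
  qed
qed

end
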